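(* In the setting of the context, there exist elements $w_{ki}\in\overline{M'}$ ($1\le k\le r$, $2\le i\le n_k$) such that (1) $\langle w_{ki},\tilde e_{k1}\rangle=-1$ and $\langle w_{ki},\tilde e_{ki}\rangle=1$; (2) $\langle w_{ki},\tilde e_{lj}\rangle=0$ for all $\tilde e_{lj}\ne\tilde e_{k1},\tilde e_{ki}$; (3) $\langle w_{ki},e_{lj}\rangle=0$ for all $e_{lj}$. Moreover, for any elements $w_{ki}$ satisfying (1)–(3), $$\operatorname{Ann}(e)'=\operatorname{Ann}(e,\tilde e)\oplus\bigoplus_{k=1}^r\bigoplus_{i=2}^{n_k}\mathbb{Z}w_{ki}.$$
   Context: $M\cong\mathbb{Z}^d$, $N$ dual. $\{\Delta_1,\dots,\Delta_s\}$ is a nef-partition (lattice polytopes in $M_\mathbb{R}$ containing $0$ with reflexive Minkowski sum) of the $d$-dimensional reflexive polytope $\operatorname{Conv}(\cup\Delta_i)$, with dual nef-partition $\nabla_j=\{y:\langle x,y\rangle\ge-\delta_{ij}\ \forall x\in\Delta_i,\forall i\}$. $\overline M=\mathbb{Z}^s\oplus M$, $\overline N=\mathbb{Z}^s\oplus N$ with natural pairing; $K=\{(a;x):a_i\ge0,x\in\sum a_i\Delta_i\}$, $K^\vee$ its dual cone; $e_i=(\epsilon_i;0)$ ($\epsilon_i$ standard basis vectors of $\mathbb{Z}^s$), $\deg^\vee=\sum e_i$. Let $\tilde e_i=(\epsilon_i;p_i)\in K^\vee\cap\overline N$ with $p_i\in N\cap\nabla_i$ and $\sum_i\tilde e_i=\deg^\vee$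 (so $\sum p_i=0$). Let $r=s-\dim\operatorname{Span}_\mathbb{R}\{p_i\}$ and let $\{1,\dots,s\}=I_1\sqcup\dots\sqcup I_r$ with $I_k$ nonempty, $\sum_{i\in I_k}p_i=0$. Write $n_k=\#I_k$, $I_k=\{k1,\dots,kn_k\}$ and index $e_{ki},\tilde e_{ki},p_{ki}$ accordingly; $\{p_{ki}:2\le i\le n_k,1\le k\le r\}$ is $\mathbb{R}$-linearly independent. Choose $\xi_1,\dots,\xi_{d+r-s}\in N$ whose images form a basis of the free part of $N/\sum_{k,i}\mathbb{Z}p_{ki}$, set $N'=\operatorname{Span}_\mathbb{Z}(\{p_{ki}:i\ge2\}\cup\{\xi_j\})$, $M'=\operatorname{Hom}(N',\mathbb{Z})\supset M$, $\overline{M'}=\mathbb{Z}^s\oplus M'$ (dual to $\mathbb{Z}^s\oplus N'$, which contains all $e_i,\tilde e_i$). $\operatorname{Ann}(e)'=\{m\in\overline{M'}:\langle m,e_i\rangle=0\ \forall i\}$ and $\operatorname{Ann}(e,\tilde e)=\{m\in\overline{M'}:\langle m,e_i\rangle=\langle m,\tilde e_j\rangle=0\ \forall i,j\}$ (which equals the corresponding sublattice of $\overline M$). *)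

theory Defs
  imports "HOL-Analysis.Analysis"
begin

text \<open>Coordinates: M_R = N_R = real^'n (d = CARD('n)), with M = N = integer vectors
  and the standard dot product as the pairing (choice of a basis of M and the dual basis of N).
  The index set {1..s} of the nef-partition is written as the pairs (k,i), 1<=k<=r, 1<=i<=n k,
  i.e. I_k = {(k,1),...,(k,n k)}.\<close>

definition lattice_pts :: "(real^'n) set" where
  "lattice_pts = {x. \<forall>i. x $ i \<in> \<int>}"

definition lattice_polytope :: "(real^'n) set \<Rightarrow> bool" where
  "lattice_polytope P \<longleftrightarrow> (\<exists>S. finite S \<and> S \<noteq> {} \<and> S \<subseteq> lattice_pts \<and> P = convex hull S)"

definition polar_dual :: "(real^'n) set \<Rightarrow> (real^'n) set" where
  "polar_dual P = {y. \<forall>x\<in>P. x \<bullet> y \<ge> -1}"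

definition reflexive_polytope :: "(real^'n) set \<Rightarrow> bool" where
  "reflexive_polytope P \<longleftrightarrow> lattice_polytope P \<and> 0 \<in> interior P \<and> lattice_polytope (polar_dual P)"

definition minkowski_sum :: "'i set \<Rightarrow> ('i \<Rightarrow> (real^'n) set) \<Rightarrow> (real^'n) set" where
  "minkowski_sum I D = {(\<Sum>j\<in>I. x j) | x. \<forall>j\<in>I. x j \<in> D j}"

definition nef_partition :: "'i set \<Rightarrow> ('i \<Rightarrow> (real^'n) set) \<Rightarrow> bool" where
  "nef_partition I D \<longleftrightarrow> finite I \<and> (\<forall>j\<in>I. lattice_polytope (D j) \<and> 0 \<in> D j)
     \<and> reflexive_polytope (minkowski_sum I D)
     \<and> reflexive_polytope (convex hull (\<Union>j\<in>I. D j))"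

definition nabla :: "'i set \<Rightarrow> ('i \<Rightarrow> (real^'n) set) \<Rightarrow> 'i \<Rightarrow> (real^'n) set" where
  "nabla I D j = {y. \<forall>i\<in>I. \<forall>x\<in>D i. x \<bullet> y \<ge> - (if i = j then 1 else 0)}"

definition Kcone :: "'i set \<Rightarrow> ('i \<Rightarrow> (real^'n) set) \<Rightarrow> (('i \<Rightarrow> real) \<times> (real^'n)) set" where
  "Kcone I D = {(a, x). (\<forall>j. j \<notin> I \<longrightarrow> a j = 0) \<and> (\<forall>j\<in>I. a j \<ge> 0) \<and>
      (\<exists>y. (\<forall>j\<in>I. y j \<in> D j) \<and> x = (\<Sum>j\<in>I. a j *\<^sub>R y j))}"

definition Kdual :: "'i set \<Rightarrow> ('i \<Rightarrow> (real^'n) set) \<Rightarrow> (('i \<Rightarrow> real) \<times> (real^'n)) set" where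
  "Kdual I D = {(b, y). (\<forall>j. j \<notin> I \<longrightarrow> b j = 0) \<and>
      (\<forall>(a, x)\<in>Kcone I D. (\<Sum>j\<in>I. a j * b j) + x \<bullet> y \<ge> 0)}"

definition Idx :: "nat \<Rightarrow> (nat \<Rightarrow> nat) \<Rightarrow> (nat \<times> nat) set" where
  "Idx r n = {(k, i). 1 \<le> k \<and> k \<le> r \<and> 1 \<le> i \<and> i \<le> n k}"

definition Idx2 :: "nat \<Rightarrow> (nat \<Rightarrow> nat) \<Rightarrow> (nat \<times> nat) set" where
  "Idx2 r n = {(k, i). 1 \<le> k \<and> k \<le> r \<and> 2 \<le> i \<and> i \<le> n k}"

text \<open>The xi_j (j = 1..t) are integer vectors whose images form a basis of the free part of
  N / (sum of Z p), i.e. a Z-basis of the torsion-free quotient N / (N \<inter> span_R {p}).\<close>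
definition free_part_basis :: "(real^'n) set \<Rightarrow> nat \<Rightarrow> (nat \<Rightarrow> real^'n) \<Rightarrow> bool" where
  "free_part_basis P t \<xi> \<longleftrightarrow>
     (\<forall>j\<in>{1..t}. \<xi> j \<in> lattice_pts) \<and>
     (\<forall>y\<in>lattice_pts. \<exists>c::nat \<Rightarrow> int. y - (\<Sum>j=1..t. of_int (c j) *\<^sub>R \<xi> j) \<in> span P) \<and>
     (\<forall>c::nat \<Rightarrow> int. (\<Sum>j=1..t. of_int (c j) *\<^sub>R \<xi> j) \<in> span P \<longrightarrow> (\<forall>j\<in>{1..t}. c j = 0))"

definition int_span :: "(real^'n) set \<Rightarrow> (real^'n) set" where
  "int_span X = {y. \<exists>c::real^'n \<Rightarrow> int. y = (\<Sum>v\<in>X. of_int (c v) *\<^sub>R v)}"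

text \<open>M' = Hom(N', Z), realised inside M_R.\<close>
definition dual_lattice :: "(real^'n) set \<Rightarrow> (real^'n) set" where
  "dual_lattice L = {m. \<forall>y\<in>L. m \<bullet> y \<in> \<int>}"

text \<open>Elements of Z^s + M' and Z^s + N': pairs (a, m) with a supported on the index set.\<close>
definition bpair :: "'i set \<Rightarrow> ('i \<Rightarrow> int) \<times> (real^'n) \<Rightarrow> ('i \<Rightarrow> int) \<times> (real^'n) \<Rightarrow> real" where
  "bpair I x y = of_int (\<Sum>j\<in>I. fst x j * fst y j) + snd x \<bullet> snd y"

definition ebar :: "'i \<Rightarrow> ('i \<Rightarrow> int) \<times> (real^'n)" where
  "ebar j = ((\<lambda>l. if l = j then 1 else 0), 0)"

definition etil :: "('i \<Rightarrow> real^'n) \<Rightarrow> 'i \<Rightarrow> ('i \<Rightarrow> int) \<times> (real^'n)" where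
  "etil p j = ((\<lambda>l. if l = j then 1 else 0), p j)"

definition Mbar :: "'i set \<Rightarrow> (real^'n) set \<Rightarrow> (('i \<Rightarrow> int) \<times> (real^'n)) set" where
  "Mbar I M = {x. (\<forall>j. j \<notin> I \<longrightarrow> fst x j = 0) \<and> snd x \<in> M}"

definition AnnE :: "'i set \<Rightarrow> (real^'n) set \<Rightarrow> (('i \<Rightarrow> int) \<times> (real^'n)) set" where
  "AnnE I M = {x \<in> Mbar I M. \<forall>j\<in>I. bpair I x (ebar j) = 0}"

definition AnnEEt :: "'i set \<Rightarrow> (real^'n) set \<Rightarrow> ('i \<Rightarrow> real^'n) \<Rightarrow> (('i \<Rightarrow> int) \<times> (real^'n)) set" where
  "AnnEEt I M p = {x \<in> Mbar I M. \<forall>j\<in>I. bpair I x (ebar j) = 0 \<and> bpair I x (etil p j) = 0}"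

definition badd :: "('i \<Rightarrow> int) \<times> (real^'n) \<Rightarrow> ('i \<Rightarrow> int) \<times> (real^'n) \<Rightarrow> ('i \<Rightarrow> int) \<times> (real^'n)" where
  "badd x y = ((\<lambda>j. fst x j + fst y j), snd x + snd y)"

definition blincomb :: "'q set \<Rightarrow> ('q \<Rightarrow> int) \<Rightarrow> ('q \<Rightarrow> ('i \<Rightarrow> int) \<times> (real^'n)) \<Rightarrow> ('i \<Rightarrow> int) \<times> (real^'n)" where
  "blincomb J c w = ((\<lambda>j. \<Sum>q\<in>J. c q * fst (w q) j), (\<Sum>q\<in>J. of_int (c q) *\<^sub>R snd (w q)))"

definition w_conditions :: "nat \<Rightarrow> (nat \<Rightarrow> nat) \<Rightarrow> (nat \<times> nat \<Rightarrow> real^'n)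
     \<Rightarrow> (nat \<times> nat \<Rightarrow> (nat \<times> nat \<Rightarrow> int) \<times> (real^'n)) \<Rightarrow> bool" where
  "w_conditions r n p w \<longleftrightarrow> (\<forall>(k, i)\<in>Idx2 r n.
      bpair (Idx r n) (w (k, i)) (etil p (k, 1)) = -1 \<and>
      bpair (Idx r n) (w (k, i)) (etil p (k, i)) = 1 \<and>
      (\<forall>lj\<in>Idx r n. lj \<noteq> (k, 1) \<and> lj \<noteq> (k, i) \<longrightarrow> bpair (Idx r n) (w (k, i)) (etil p lj) = 0) \<and>
      (\<forall>lj\<in>Idx r n. bpair (Idx r n) (w (k, i)) (ebar lj) = 0))"

end

theory Submission
  imports Defs
begin



lemma functional_exists:
  fixes B :: "(real^'n) set"
  assumes "independent B"
  shows "\<exists>m. \<forall>b\<in>B. m \<bullet> b = f b"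
proof -
  obtain g :: "real^'n \<Rightarrow> real" where g: "linear g" "\<forall>x\<in>B. g x = f x"
    using linear_independent_extend[OF assms] by blast
  show ?thesis
    by (rule exI[of _ "adjoint g 1"]) (metis adjoint_works g inner_commute mult.right_neutral inner_real_def)
qed

lemma bpair_ebar: "finite I \<Longrightarrow> j \<in> I \<Longrightarrow> bpair I x (ebar j) = of_int (fst x j)"
  unfolding bpair_def ebar_def by (simp add: if_distrib cong: if_cong)

lemma bpair_etil: "finite I \<Longrightarrow> j \<in> I \<Longrightarrow> bpair I x (etil p j) = of_int (fst x j) + snd x \<bullet> p j"
  unfolding bpair_def etil_def by (simp add: if_distrib cong: if_cong)

lemma dual_int_span:
  assumes "\<forall>v\<in>X. m \<bullet> v \<in> \<int>"
  shows "m \<in> dual_lattice (int_span X)"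
  unfolding dual_lattice_def int_span_def
  using assms by (auto simp: inner_sum_right intro!: Ints_sum Ints_mult)

lemma in_int_span: "finite X \<Longrightarrow> a \<in> X \<Longrightarrow> a \<in> int_span X"
  unfolding int_span_def
proof (rule CollectI, rule exI[of _ "\<lambda>v. if v = a then 1 else 0"])
  assume "finite X" "a \<in> X"
  have "(\<Sum>v\<in>X. of_int (if v = a then 1 else 0) *\<^sub>R v) = (\<Sum>v\<in>X. if v = a then v else 0)"
    by (rule sum.cong) auto
  also have "\<dots> = a" using \<open>finite X\<close> \<open>a \<in> X\<close> by (simp add: sum.delta)
  finally show "a = (\<Sum>v\<in>X. of_int (if v = a then 1 else 0) *\<^sub>R v)" by simp
qed

lemma Idx_eq: "Idx r n = Sigma {1..r} (\<lambda>k. {1..n k})"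
  unfolding Idx_def by auto
lemma Idx2_eq: "Idx2 r n = Sigma {1..r} (\<lambda>k. {2..n k})"
  unfolding Idx2_def by auto
lemma finite_Idx: "finite (Idx r n)" unfolding Idx_eq by auto
lemma finite_Idx2: "finite (Idx2 r n)" unfolding Idx2_eq by auto
lemma Idx_split: "\<forall>k\<in>{1..r}. 1 \<le> n k \<Longrightarrow> Idx r n = Idx2 r n \<union> (\<lambda>k. (k,1)) ` {1..r}"
  unfolding Idx_def Idx2_def by force
lemma card_Idx: "\<forall>k\<in>{1..r}. 1 \<le> n k \<Longrightarrow> card (Idx r n) = card (Idx2 r n) + r"
  apply (subst Idx_split, assumption)
  apply (subst card_Un_disjoint)
  using finite_Idx2[of r n] by (auto simp: Idx2_def card_image inj_on_def)


theorem lemma4p3: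
  fixes \<Delta> :: "nat \<times> nat \<Rightarrow> (real^'n) set"
    and r :: nat and n :: "nat \<Rightarrow> nat"
    and p :: "nat \<times> nat \<Rightarrow> real^'n"
    and \<xi> :: "nat \<Rightarrow> real^'n"
  assumes blocks_nonempty: "\<forall>k\<in>{1..r}. 1 \<le> n k"
    and nef: "nef_partition (Idx r n) \<Delta>"
    and p_in: "\<forall>j\<in>Idx r n. p j \<in> lattice_pts \<and> p j \<in> nabla (Idx r n) \<Delta> j"
    and etil_Kdual: "\<forall>j\<in>Idx r n. ((\<lambda>l. if l = j then 1 else 0), p j) \<in> Kdual (Idx r n) \<Delta>"
    and sum_p: "(\<Sum>j\<in>Idx r n. p j) = 0"
    and r_def: "r = card (Idx r n) - dim (p ` Idx r n)"
    and block_sums: "\<forall>k\<in>{1..r}. (\<Sum>i=1..n k. p (k, i)) = 0"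
    and indep: "inj_on p (Idx2 r n) \<and> independent (p ` Idx2 r n)"
    and xi: "free_part_basis (p ` Idx r n) (CARD('n) + r - card (Idx r n)) \<xi>"
  shows "let N' = int_span (p ` Idx2 r n \<union> \<xi> ` {1..CARD('n) + r - card (Idx r n)});
             M' = dual_lattice N'
         in (\<exists>w. (\<forall>q\<in>Idx2 r n. w q \<in> Mbar (Idx r n) M') \<and> w_conditions r n p w) \<and>
            (\<forall>w. (\<forall>q\<in>Idx2 r n. w q \<in> Mbar (Idx r n) M') \<and> w_conditions r n p w \<longrightarrow>
               (\<forall>x\<in>AnnE (Idx r n) M'.
                  \<exists>!(a, c). a \<in> AnnEEt (Idx r n) M' p \<and> (\<forall>q. q \<notin> Idx2 r n \<longrightarrow> c q = 0) \<and>
                    x = badd a (blincomb (Idx2 r n) c w)))"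
proof -
  define t where "t = CARD('n) + r - card (Idx r n)"
  define B where "B = p ` Idx2 r n \<union> \<xi> ` {1..t}"
  define M' where "M' = dual_lattice (int_span B)"
  have finI: "finite (Idx r n)" by (rule finite_Idx)
  have finJ: "finite (Idx2 r n)" by (rule finite_Idx2)
  have finB: "finite B" unfolding B_def using finJ by simp
  have JI: "Idx2 r n \<subseteq> Idx r n" unfolding Idx_def Idx2_def by auto
  have p1: "\<forall>k\<in>{1..r}. p (k,1) = - (\<Sum>i=2..n k. p (k,i))"
  proof
    fix k assume k: "k \<in> {1..r}"
    have "(\<Sum>i=1..n k. p (k,i)) = p (k,1) + (\<Sum>i=Suc 1..n k. p (k,i))"
      using blocks_nonempty k by (intro sum.atLeast_Suc_atMost) auto
    moreover have "{Suc 1..n k} = {2..n k}" by simp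
    ultimately have "p (k,1) + (\<Sum>i=2..n k. p (k,i)) = 0" using block_sums k by (simp add: numeral_2_eq_2)
    then show "p (k,1) = - (\<Sum>i=2..n k. p (k,i))" by (simp add: eq_neg_iff_add_eq_0)
  qed
  have kiJ: "(k,i) \<in> Idx2 r n" if "k \<in> {1..r}" "i \<in> {2..n k}" for k i
    using that unfolding Idx2_def by auto
  have IJcase: "j \<in> Idx2 r n \<or> (\<exists>k\<in>{1..r}. j = (k,1))" if "j \<in> Idx r n" for j
    using that unfolding Idx_def Idx2_def by auto
  have spanP: "p ` Idx r n \<subseteq> span (p ` Idx2 r n)"
  proof
    fix y assume "y \<in> p ` Idx r n"
    then obtain j where j: "j \<in> Idx r n" "y = p j" by auto
    show "y \<in> span (p ` Idx2 r n)"
    proof (cases "j \<in> Idx2 r n")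
      case True then show ?thesis using j by (simp add: span_base)
    next
      case False
      then obtain k where k: "k \<in> {1..r}" "j = (k,1)" using IJcase[OF j(1)] by auto
      have "(\<Sum>i=2..n k. p (k,i)) \<in> span (p ` Idx2 r n)"
        by (rule span_sum) (use k kiJ in \<open>auto intro: span_base\<close>)
      then show ?thesis using j k p1 by (simp add: span_neg)
    qed
  qed
  have spanB: "span B = UNIV"
  proof -
    have "Basis \<subseteq> span B"
    proof
      fix e :: "real^'n" assume "e \<in> Basis"
      then obtain i where ei: "e = axis i 1" unfolding Basis_vec_def by auto
      have "e \<in> lattice_pts" unfolding lattice_pts_def ei axis_def by simp
      moreover have xi2: "\<forall>y\<in>lattice_pts. \<exists>c::nat\<Rightarrow>int. y - (\<Sum>j=1..t. of_int (c j) *\<^sub>R \<xi> j) \<in> span (p ` Idx r n)"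
        using xi unfolding free_part_basis_def t_def[symmetric] by (elim conjE) assumption
      ultimately obtain c :: "nat \<Rightarrow> int" where c: "e - (\<Sum>j=1..t. of_int (c j) *\<^sub>R \<xi> j) \<in> span (p ` Idx r n)"
        by (meson bspec)
      have "span (p ` Idx r n) \<subseteq> span (p ` Idx2 r n)"
        using spanP by (metis span_minimal subspace_span)
      also have "\<dots> \<subseteq> span B" unfolding B_def by (rule span_mono) auto
      finally have 1: "e - (\<Sum>j=1..t. of_int (c j) *\<^sub>R \<xi> j) \<in> span B" using c by blast
      have 2: "(\<Sum>j=1..t. of_int (c j) *\<^sub>R \<xi> j) \<in> span B"
        unfolding B_def by (intro span_sum span_scale span_base) auto
      from span_add[OF 1 2] show "e \<in> span B" by simp
    qed
    then have "span Basis \<subseteq> span B" by (metis span_minimal subspace_span)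
    then show ?thesis by auto
  qed
  have cardJ: "card (Idx2 r n) \<le> CARD('n)"
  proof -
    have "card (p ` Idx2 r n) \<le> DIM(real^'n)" using indep independent_bound[of "p ` Idx2 r n"] by simp
    moreover have "card (p ` Idx2 r n) = card (Idx2 r n)" using indep card_image[of p "Idx2 r n"] by simp
    ultimately show ?thesis by simp
  qed
  have cardI: "card (Idx r n) = card (Idx2 r n) + r" using card_Idx[OF blocks_nonempty] .
  have cardB: "card B \<le> CARD('n)"
  proof -
    have "card B \<le> card (p ` Idx2 r n) + card (\<xi> ` {1..t})" unfolding B_def by (rule card_Un_le)
    also have "\<dots> \<le> card (Idx2 r n) + t" using card_image_le[OF finJ, of p] card_image_le[of "{1..t}" \<xi>] by simp
    also have "\<dots> = CARD('n)" unfolding t_def cardI using cardJ by simp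
    finally show ?thesis .
  qed
  have indB: "independent B"
    by (rule card_le_dim_spanning[of B UNIV]) (use finB cardB spanB in auto)
  have "\<forall>q\<in>Idx2 r n. \<exists>m. \<forall>b\<in>B. m \<bullet> b = (if b = p q then 1 else 0)"
    by (intro ballI functional_exists[OF indB])
  then obtain mm where mm: "\<forall>q\<in>Idx2 r n. \<forall>b\<in>B. mm q \<bullet> b = (if b = p q then 1 else 0)"
    by metis
  have mmJ: "mm q \<bullet> p j = (if j = q then 1 else 0)" if "q \<in> Idx2 r n" "j \<in> Idx2 r n" for q j
  proof -
    have "p j \<in> B" using that unfolding B_def by auto
    then have "mm q \<bullet> p j = (if p j = p q then 1 else 0)" using mm that by auto
    also have "(p j = p q) = (j = q)" using indep that by (auto simp: inj_on_def)
    finally show ?thesis by simp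
  qed
  have mm1: "mm q \<bullet> p (l,1) = - (\<Sum>i=2..n l. if (l,i) = q then 1 else 0)" if "q \<in> Idx2 r n" "l \<in> {1..r}" for q l
  proof -
    have "mm q \<bullet> p (l,1) = - (\<Sum>i=2..n l. mm q \<bullet> p (l,i))"
      using p1 that by (simp add: inner_sum_right)
    also have "(\<Sum>i=2..n l. mm q \<bullet> p (l,i)) = (\<Sum>i=2..n l. if (l,i) = q then 1 else 0)"
      by (rule sum.cong) (use that kiJ mmJ in auto)
    finally show ?thesis .
  qed
  define w0 where "w0 = (\<lambda>q. ((\<lambda>_::nat\<times>nat. 0::int), mm q))"
  have ex: "(\<forall>q\<in>Idx2 r n. w0 q \<in> Mbar (Idx r n) M') \<and> w_conditions r n p w0"
  proof
    show "\<forall>q\<in>Idx2 r n. w0 q \<in> Mbar (Idx r n) M'"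
    proof
      fix q assume q: "q \<in> Idx2 r n"
      have "mm q \<in> M'" unfolding M'_def
        by (rule dual_int_span) (use mm q in auto)
      then show "w0 q \<in> Mbar (Idx r n) M'" unfolding Mbar_def w0_def by simp
    qed
    show "w_conditions r n p w0"
      unfolding w_conditions_def
    proof (intro ballI, clarify, intro conjI)
      fix k i assume ki: "(k,i) \<in> Idx2 r n"
      then have k: "k \<in> {1..r}" and i: "i \<in> {2..n k}" unfolding Idx2_def by auto
      have k1: "(k,1) \<in> Idx r n" using k blocks_nonempty unfolding Idx_def by auto
      have kiI: "(k,i) \<in> Idx r n" using ki JI by auto
      have s: "(\<Sum>i'=2..n k. if (k,i') = (k,i) then 1 else (0::real)) = 1"
        using i by (simp add: sum.delta')
      show "bpair (Idx r n) (w0 (k, i)) (etil p (k, 1)) = - 1"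
        using bpair_etil[OF finI k1, of "w0 (k,i)" p] mm1[OF ki k] s by (simp add: w0_def)
      show "bpair (Idx r n) (w0 (k, i)) (etil p (k, i)) = 1"
        using bpair_etil[OF finI kiI, of "w0 (k,i)" p] mmJ[OF ki ki] by (simp add: w0_def)
      show "\<forall>lj\<in>Idx r n. lj \<noteq> (k, 1) \<and> lj \<noteq> (k, i) \<longrightarrow> bpair (Idx r n) (w0 (k, i)) (etil p lj) = 0"
      proof (intro ballI impI)
        fix lj assume lj: "lj \<in> Idx r n" "lj \<noteq> (k, 1) \<and> lj \<noteq> (k, i)"
        have "mm (k,i) \<bullet> p lj = 0"
        proof (cases "lj \<in> Idx2 r n")
          case True then show ?thesis using mmJ[OF ki True] lj by simp
        next
          case False
          then obtain l where l: "l \<in> {1..r}" "lj = (l,1)" using IJcase[OF lj(1)] by auto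
          have "l \<noteq> k" using l lj by auto
          then show ?thesis using mm1[OF ki l(1)] l by simp
        qed
        then show "bpair (Idx r n) (w0 (k, i)) (etil p lj) = 0"
          using bpair_etil[OF finI lj(1), of "w0 (k,i)" p] by (simp add: w0_def)
      qed
      show "\<forall>lj\<in>Idx r n. bpair (Idx r n) (w0 (k, i)) (ebar lj) = 0"
        using bpair_ebar[OF finI, of _ "w0 (k,i)"] by (simp add: w0_def)
    qed
  qed
  have uq: "\<forall>x\<in>AnnE (Idx r n) M'.
                  \<exists>!(a, c). a \<in> AnnEEt (Idx r n) M' p \<and> (\<forall>q. q \<notin> Idx2 r n \<longrightarrow> c q = 0) \<and>
                    x = badd a (blincomb (Idx2 r n) c w)"
    if hw: "(\<forall>q\<in>Idx2 r n. w q \<in> Mbar (Idx r n) M') \<and> w_conditions r n p w" for w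
  proof
    fix x assume x: "x \<in> AnnE (Idx r n) M'"
    have fw0: "fst (w q) j = 0" if q: "q \<in> Idx2 r n" for q j
    proof (cases "j \<in> Idx r n")
      case True
      then have "bpair (Idx r n) (w q) (ebar j) = 0" using hw q unfolding w_conditions_def by fast
      then show ?thesis using bpair_ebar[OF finI True, of "w q"] by simp
    next
      case False then show ?thesis using hw q unfolding Mbar_def by (cases j) auto
    qed
    have wp: "snd (w q) \<bullet> p j = (if j = q then 1 else 0)" if q: "q \<in> Idx2 r n" and j: "j \<in> Idx2 r n" for q j
    proof -
      obtain k i where ki: "q = (k,i)" by fastforce
      have jI: "j \<in> Idx r n" using j JI by auto
      have "bpair (Idx r n) (w q) (etil p j) = (if j = q then 1 else 0)"
      proof (cases "j = q")
        case True then show ?thesis using hw q ki unfolding w_conditions_def by fastforce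
      next
        case False
        have "j \<noteq> (k,1)" using j unfolding Idx2_def by auto
        then show ?thesis using False hw q ki jI unfolding w_conditions_def by fastforce
      qed
      then show ?thesis using bpair_etil[OF finI jI, of "w q" p] fw0[OF q] by simp
    qed
    have fx0: "fst x j = 0" for j
    proof (cases "j \<in> Idx r n")
      case True
      then have "bpair (Idx r n) x (ebar j) = 0" using x unfolding AnnE_def by blast
      then show ?thesis using bpair_ebar[OF finI True, of x] by simp
    next
      case False then show ?thesis using x unfolding AnnE_def Mbar_def by (cases j) auto
    qed
    have xM: "snd x \<in> M'" using x unfolding AnnE_def Mbar_def by auto
    have xpint: "snd x \<bullet> p j \<in> \<int>" if j: "j \<in> Idx2 r n" for j
    proof -
      have "p j \<in> int_span B" by (rule in_int_span[OF finB]) (use j in \<open>auto simp: B_def\<close>)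
      then show ?thesis using xM unfolding M'_def dual_lattice_def by auto
    qed
    have blf: "fst (blincomb (Idx2 r n) c w) j = 0" for c j
      unfolding blincomb_def using fw0 by simp
    have bls: "snd (blincomb (Idx2 r n) c w) \<bullet> p j = of_int (c j)" if j: "j \<in> Idx2 r n" for c j
    proof -
      have "snd (blincomb (Idx2 r n) c w) \<bullet> p j = (\<Sum>q\<in>Idx2 r n. of_int (c q) * (snd (w q) \<bullet> p j))"
        unfolding blincomb_def by (simp add: inner_sum_left)
      also have "\<dots> = (\<Sum>q\<in>Idx2 r n. if j = q then of_int (c q) else 0)"
        by (rule sum.cong) (use wp j in auto)
      also have "\<dots> = of_int (c j)" using finJ j by (simp add: sum.delta)
      finally show ?thesis .
    qed
    have blM: "snd (blincomb (Idx2 r n) c w) \<in> M'" for c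
    proof -
      have "\<forall>q\<in>Idx2 r n. snd (w q) \<in> M'" using hw unfolding Mbar_def by auto
      then show ?thesis unfolding M'_def dual_lattice_def blincomb_def
        by (auto simp: inner_sum_left intro!: Ints_sum Ints_mult)
    qed
    define c0 where "c0 q = (if q \<in> Idx2 r n then \<lfloor>snd x \<bullet> p q\<rfloor> else 0)" for q
    define a0 where "a0 = ((\<lambda>j. fst x j - fst (blincomb (Idx2 r n) c0 w) j), snd x - snd (blincomb (Idx2 r n) c0 w))"
    have minus: "a = ((\<lambda>j. fst x j - fst b j), snd x - snd b)" if "x = badd a b" for a b
      using that unfolding badd_def by (auto simp: prod_eq_iff)
    have a0p: "snd a0 \<bullet> p j = 0" if j: "j \<in> Idx2 r n" for j
    proof -
      have "snd a0 \<bullet> p j = snd x \<bullet> p j - of_int (c0 j)"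
        unfolding a0_def using bls[OF j] by (simp add: inner_diff_left)
      also have "\<dots> = 0" using xpint[OF j] unfolding c0_def using j
        by (auto elim!: Ints_cases)
      finally show ?thesis .
    qed
    have a0A: "a0 \<in> AnnEEt (Idx r n) M' p"
    proof -
      have fa: "fst a0 j = 0" for j unfolding a0_def using fx0 blf by simp
      have sa: "snd a0 \<in> M'"
      proof -
        have "snd x - snd (blincomb (Idx2 r n) c0 w) \<in> M'"
          using xM blM[of c0] unfolding M'_def dual_lattice_def by (auto simp: inner_diff_left)
        then show ?thesis unfolding a0_def by simp
      qed
      have pa: "snd a0 \<bullet> p j = 0" if j: "j \<in> Idx r n" for j
      proof (cases "j \<in> Idx2 r n")
        case True then show ?thesis using a0p by simp
      next
        case False
        then obtain l where l: "l \<in> {1..r}" "j = (l,1)" using IJcase[OF j] by auto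
        have "snd a0 \<bullet> p j = - (\<Sum>i=2..n l. snd a0 \<bullet> p (l,i))"
          using p1 l by (simp add: inner_sum_right)
        also have "\<dots> = 0" using a0p kiJ l by simp
        finally show ?thesis .
      qed
      show ?thesis unfolding AnnEEt_def Mbar_def
        using fa sa pa bpair_ebar[OF finI, of _ a0] bpair_etil[OF finI, of _ a0 p] by simp
    qed
    have xeq: "x = badd a0 (blincomb (Idx2 r n) c0 w)"
      unfolding a0_def badd_def by (simp add: prod_eq_iff)
    show "\<exists>!(a, c). a \<in> AnnEEt (Idx r n) M' p \<and> (\<forall>q. q \<notin> Idx2 r n \<longrightarrow> c q = 0) \<and>
                    x = badd a (blincomb (Idx2 r n) c w)"
    proof (rule ex1I[of _ "(a0, c0)"])
      show "case (a0, c0) of (a, c) \<Rightarrow> a \<in> AnnEEt (Idx r n) M' p \<and> (\<forall>q. q \<notin> Idx2 r n \<longrightarrow> c q = 0) \<and>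
                    x = badd a (blincomb (Idx2 r n) c w)"
        using a0A xeq by (simp add: c0_def)
    next
      fix y assume "case y of (a, c) \<Rightarrow> a \<in> AnnEEt (Idx r n) M' p \<and> (\<forall>q. q \<notin> Idx2 r n \<longrightarrow> c q = 0) \<and>
                    x = badd a (blincomb (Idx2 r n) c w)"
      moreover obtain a c where y: "y = (a, c)" by fastforce
      ultimately have aA: "a \<in> AnnEEt (Idx r n) M' p" and c0q: "\<forall>q. q \<notin> Idx2 r n \<longrightarrow> c q = 0"
        and xa: "x = badd a (blincomb (Idx2 r n) c w)" by auto
      have cc: "c = c0"
      proof
        fix q show "c q = c0 q"
        proof (cases "q \<in> Idx2 r n")
          case False
          from c0q False have "c q = 0" by blast
          then show ?thesis using False by (simp add: c0_def)
        next
          case True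
          have qI: "q \<in> Idx r n" using True JI by auto
          have "bpair (Idx r n) a (ebar q) = 0" "bpair (Idx r n) a (etil p q) = 0"
            using aA qI unfolding AnnEEt_def by auto
          then have "snd a \<bullet> p q = 0" using bpair_ebar[OF finI qI, of a] bpair_etil[OF finI qI, of a p] by simp
          then have "snd x \<bullet> p q = of_int (c q)"
            using xa bls[OF True] unfolding badd_def by (simp add: inner_add_left)
          then show ?thesis using True by (simp add: c0_def)
        qed
      qed
      have "a = a0" using minus[OF xa] unfolding a0_def cc by simp
      then show "y = (a0, c0)" using y cc by simp
    qed
  qed
  have main: "(\<exists>w. (\<forall>q\<in>Idx2 r n. w q \<in> Mbar (Idx r n) M') \<and> w_conditions r n p w) \<and>
            (\<forall>w. (\<forall>q\<in>Idx2 r n. w q \<in> Mbar (Idx r n) M') \<and> w_conditions r n p w \<longrightarrow>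
               (\<forall>x\<in>AnnE (Idx r n) M'.
                  \<exists>!(a, c). a \<in> AnnEEt (Idx r n) M' p \<and> (\<forall>q. q \<notin> Idx2 r n \<longrightarrow> c q = 0) \<and>
                    x = badd a (blincomb (Idx2 r n) c w)))"
    using ex uq by blast
  show ?thesis using main unfolding Let_def M'_def B_def t_def .
qed

end
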